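(* Let $\Pi\in\boldsymbol{\Pi}_{q,r}$ and $W\in\mathbb{R}^{q\times p}$, and define $\Pi_W:=\begin{bmatrix}W^\top\Pi_{11}W&W^\top\Pi_{12}\\ \Pi_{21}W&\Pi_{22}\end{bmatrix}\in\mathbb{S}^{p+r}$. Then $\mathcal{Z}_r(\Pi)W\subseteq\mathcal{Z}_r(\Pi_W)$. If, in addition, $W$ has full column rank or $\Pi_{22}$ is nonsingular, then $\mathcal{Z}_r(\Pi)W=\mathcal{Z}_r(\Pi_W)$.
   Context: $\mathbb{S}^k$ denotes the real symmetric $k\times k$ matrices; for symmetric matrices, $A\ge 0$ means positive semidefinite. $A^\dagger$ is the Moore–Penrose pseudo-inverse. Any $\Pi\in\mathbb{S}^{q+r}$ is partitioned as $\Pi=\begin{bmatrix}\Pi_{11}&\Pi_{12}\\ \Pi_{21}&\Pi_{22}\end{bmatrix}$ with $\Pi_{11}\in\mathbb{S}^q$, $\Pi_{22}\in\mathbb{S}^r$. The generalized Schur complement is $\Pi\mid\Pi_{22}:=\Pi_{11}-\Pi_{12}\Pi_{22}^\dagger\Pi_{21}$. The set $\boldsymbol{\Pi}_{q,r}$ consists of all $\Pi\in\mathbb{S}^{q+r}$ with $\Pi_{22}\le 0$, $\Pi\mid\Pi_{22}\ge 0$ and $\ker\Pi_{22}\subseteq\ker\Pi_{12}$. Define $\mathcal{Z}_r(\Pi)=\{Z\in\mathbb{R}^{r\times q}:\begin{bmatrix}I_q\\ Z\end{bmatrix}^\top\Pi\begin{bmatrix}I_q\\ Z\end{bmatrix}\ge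 0\}$ (and analogously $\mathcal{Z}_r(\Pi_W)\subseteq\mathbb{R}^{r\times p}$ with $I_p$). For a set $\mathcal{S}\subseteq\mathbb{R}^{r\times q}$, $\mathcal{S}W:=\{SW:S\in\mathcal{S}\}$. *)

theory Defs
  imports "HOL-Analysis.Analysis"
begin

text \<open>Positive semidefiniteness of a (symmetric) real square matrix.\<close>
definition psd :: "real^'n^'n \<Rightarrow> bool" where
  "psd A \<longleftrightarrow> transpose A = A \<and> (\<forall>x. 0 \<le> x \<bullet> (A *v x))"

definition nsd :: "real^'n^'n \<Rightarrow> bool" where
  "nsd A \<longleftrightarrow> psd (- A)"

definition symmetric_mat :: "real^'n^'n \<Rightarrow> bool" where
  "symmetric_mat A \<longleftrightarrow> transpose A = A"

text \<open>Moore--Penrose pseudo-inverse, via the four Penrose conditions.\<close>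
definition pinv :: "real^'n^'m \<Rightarrow> real^'m^'n" where
  "pinv A = (THE X. A ** X ** A = A \<and> X ** A ** X = X \<and>
                    transpose (A ** X) = A ** X \<and> transpose (X ** A) = X ** A)"

definition mker :: "real^'n^'m \<Rightarrow> (real^'n) set" where
  "mker A = {x. A *v x = 0}"

text \<open>Blocks of a matrix indexed by a sum type ('q + 'r).\<close>
definition blk11 :: "real^('q::finite+'r::finite)^('q+'r) \<Rightarrow> real^'q^'q" where
  "blk11 P = (\<chi> i j. P $ Inl i $ Inl j)"
definition blk12 :: "real^('q::finite+'r::finite)^('q+'r) \<Rightarrow> real^'r^'q" where
  "blk12 P = (\<chi> i j. P $ Inl i $ Inr j)"
definition blk21 :: "real^('q::finite+'r::finite)^('q+'r) \<Rightarrow> real^'q^'r" where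
  "blk21 P = (\<chi> i j. P $ Inr i $ Inl j)"
definition blk22 :: "real^('q::finite+'r::finite)^('q+'r) \<Rightarrow> real^'r^'r" where
  "blk22 P = (\<chi> i j. P $ Inr i $ Inr j)"

text \<open>Block matrix [A B; C D].\<close>
definition block_mat :: "real^'c^'a \<Rightarrow> real^'d^'a \<Rightarrow> real^'c^'b \<Rightarrow> real^'d^'b
    \<Rightarrow> real^('c::finite+'d::finite)^('a::finite+'b::finite)" where
  "block_mat A B C D = (\<chi> i j. (case i of
       Inl a \<Rightarrow> (case j of Inl c \<Rightarrow> A $ a $ c | Inr d \<Rightarrow> B $ a $ d)
     | Inr b \<Rightarrow> (case j of Inl c \<Rightarrow> C $ b $ c | Inr d \<Rightarrow> D $ b $ d)))"

text \<open>Generalized Schur complement  Pi | Pi22.\<close>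
definition schur22 :: "real^('q::finite+'r::finite)^('q+'r) \<Rightarrow> real^'q^'q" where
  "schur22 P = blk11 P - blk12 P ** pinv (blk22 P) ** blk21 P"

text \<open>The set  \<Pi>_{q,r}.\<close>
definition PiSet :: "(real^('q::finite+'r::finite)^('q+'r)) set" where
  "PiSet = {P. symmetric_mat P \<and> nsd (blk22 P) \<and> psd (schur22 P)
              \<and> mker (blk22 P) \<subseteq> mker (blk12 P)}"

text \<open>Stacked matrix [I; Z].\<close>
definition stackI :: "real^'q^'r \<Rightarrow> real^'q^('q+'r)" where
  "stackI Z = (\<chi> i. case i of Inl a \<Rightarrow> (mat 1 :: real^'q^'q) $ a | Inr b \<Rightarrow> Z $ b)"

text \<open>Z_r(Pi) = {Z :: r x q. [I;Z]^T Pi [I;Z] \<ge> 0}.\<close>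
definition Zset :: "real^('q::finite+'r::finite)^('q+'r) \<Rightarrow> (real^'q^'r) set" where
  "Zset P = {Z. psd (transpose (stackI Z) ** P ** stackI Z)}"

text \<open>Pi_W.\<close>
definition PiW :: "real^('q::finite+'r::finite)^('q+'r) \<Rightarrow> real^'p^'q \<Rightarrow> real^('p::finite+'r)^('p+'r)" where
  "PiW P W = block_mat (transpose W ** blk11 P ** W) (transpose W ** blk12 P)
                       (blk21 P ** W) (blk22 P)"

end

theory Submission
  imports Defs
begin


lemma inner_mv_transpose:
  fixes M :: "real^'n^'m"
  shows "inner (M *v x) y = inner x (transpose M *v y)"
  by (metis dot_lmul_matrix inner_commute vector_transpose_matrix)

lemma vec_eq_by_inner:
  fixes a b :: "real^'n"
  assumes "\<And>x. inner x a = inner x b" shows "a = b"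
  by (metis assms inner_diff_right inner_eq_zero_iff right_minus_eq)

lemma transpose_eq_by_inner:
  fixes M :: "real^'n^'n"
  assumes "\<And>x y. inner (M *v x) y = inner x (M *v y)"
  shows "transpose M = M"
proof -
  have "transpose M *v y = M *v y" for y
    by (rule vec_eq_by_inner) (metis assms inner_commute inner_mv_transpose)
  then show ?thesis by (simp add: matrix_eq)
qed

definition penrose :: "real^'n^'m \<Rightarrow> real^'m^'n \<Rightarrow> bool" where
  "penrose A X \<longleftrightarrow> A ** X ** A = A \<and> X ** A ** X = X \<and>
                    transpose (A ** X) = A ** X \<and> transpose (X ** A) = X ** A"

lemma penrose_unique:
  assumes "penrose A X" "penrose A Y" shows "X = Y"
proof -
  from assms have a1: "A ** X ** A = A" and a2: "X ** A ** X = X" and a3: "transpose (A ** X) = A ** X"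
    and a4: "transpose (X ** A) = X ** A" and b1: "A ** Y ** A = A" and b2: "Y ** A ** Y = Y"
    and b3: "transpose (A ** Y) = A ** Y" and b4: "transpose (Y ** A) = Y ** A"
    by (auto simp: penrose_def)
  have "X = X ** (A ** X)" using a2 by (simp add: matrix_mul_assoc)
  also have "\<dots> = X ** transpose (A ** X)" using a3 by simp
  also have "\<dots> = X ** transpose (A ** Y ** A ** X)" using b1 by simp
  also have "\<dots> = X ** (transpose (A ** X) ** transpose (A ** Y))"
    by (simp add: matrix_transpose_mul matrix_mul_assoc)
  also have "\<dots> = X ** ((A ** X) ** (A ** Y))" using a3 b3 by simp
  also have "\<dots> = (X ** A ** X) ** A ** Y" by (simp add: matrix_mul_assoc)
  also have "\<dots> = X ** A ** Y" using a2 by simp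
  finally have 1: "X = X ** A ** Y" .
  have "Y = (Y ** A) ** Y" using b2 by (simp add: matrix_mul_assoc)
  also have "\<dots> = transpose (Y ** A) ** Y" using b4 by simp
  also have "\<dots> = transpose (Y ** A ** X ** A) ** Y" by (metis a1 matrix_mul_assoc)
  also have "\<dots> = (transpose (X ** A) ** transpose (Y ** A)) ** Y"
    by (simp add: matrix_transpose_mul matrix_mul_assoc)
  also have "\<dots> = ((X ** A) ** (Y ** A)) ** Y" using a4 b4 by simp
  also have "\<dots> = X ** A ** (Y ** A ** Y)" by (simp add: matrix_mul_assoc)
  also have "\<dots> = X ** A ** Y" using b2 by simp
  finally show ?thesis using 1 by simp
qed



lemma penrose_exists_sym:
  fixes A :: "real^'n^'n"
  assumes sym: "transpose A = A"
  shows "\<exists>X. penrose A X"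
proof -
  define V where "V = range ((*v) A)"
  have symA: "inner (A *v x) y = inner x (A *v y)" for x y
    using inner_mv_transpose[of A x y] sym by simp
  have linA: "linear ((*v) A)" by (simp add: matrix_vector_mul_linear)
  have sV: "subspace V" unfolding V_def
    using linA by (simp add: linear_subspace_image)
  have spV: "span V = V" using sV by (simp add: span_eq_iff)
  have ker: "d = 0" if dV: "d \<in> V" and dA: "A *v d = 0" for d
  proof -
    obtain w where w: "d = A *v w" using dV unfolding V_def by blast
    have "inner d d = inner w (A *v d)" using symA w by simp
    then show ?thesis using dA by simp
  qed
  have inj: "inj_on ((*v) A) (span V)"
    unfolding spV inj_on_def
  proof (intro ballI impI)
    fix x y assume "x \<in> V" "y \<in> V" "A *v x = A *v y"
    then have "x - y \<in> V" "A *v (x - y) = 0"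
      by (auto simp: sV subspace_diff matrix_vector_mult_diff_distrib)
    then show "x = y" using ker[of "x - y"] by simp
  qed
  obtain g where rg: "range g \<subseteq> span V" and lin: "linear g"
    and gf: "\<And>x. x \<in> span V \<Longrightarrow> g (A *v x) = x"
    using linear_inj_on_left_inverse[OF linA inj] by blast
  have dec: "\<exists>y z. y \<in> V \<and> A *v z = 0 \<and> x = y + z" for x
  proof -
    obtain y z where y: "y \<in> span V" and z: "\<And>w. w \<in> span V \<Longrightarrow> orthogonal z w"
      and xyz: "x = y + z"
      using orthogonal_subspace_decomp_exists[of V x] by blast
    have "A *v (A *v z) \<in> V" unfolding V_def by blast
    then have "A *v (A *v z) \<in> span V" by (rule span_base)
    then have "inner z (A *v (A *v z)) = 0" using z orthogonal_def by blast
    then have "inner (A *v z) (A *v z) = 0" using symA by simp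
    then show ?thesis using y xyz spV by auto
  qed
  have gV: "g y \<in> V" for y
  proof -
    have "g y \<in> span V" using rg by blast
    then show ?thesis using spV by metis
  qed
  have gA: "g (A *v x) \<in> V" for x using gV by blast
  have Pdec: "g (A *v x) = y" if "y \<in> V" "A *v z = 0" "x = y + z" for x y z
    using that gf spV by (simp add: matrix_vector_right_distrib)
  have AgA: "A *v g (A *v x) = A *v x" for x
  proof -
    obtain y z where "y \<in> V" "A *v z = 0" "x = y + z" using dec by blast
    then show ?thesis using Pdec[of y z x] by (simp add: matrix_vector_right_distrib)
  qed
  have Agw: "A *v g w = w" if "w \<in> V" for w
    using that AgA unfolding V_def by auto
  define X0 where "X0 = matrix g"
  have X0: "X0 *v y = g y" for y unfolding X0_def using lin by (simp add: matrix_works)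
  define P where "P = X0 ** A"
  have Pv: "P *v x = g (A *v x)" for x by (simp add: P_def X0 matrix_vector_mul_assoc[symmetric])
  have Pw: "P *v w = w" if "w \<in> V" for w using Pv gf spV that by simp
  have Psym: "transpose P = P"
  proof (rule transpose_eq_by_inner)
    fix x w
    obtain y1 z1 where 1: "y1 \<in> V" "A *v z1 = 0" "x = y1 + z1" using dec by blast
    obtain y2 z2 where 2: "y2 \<in> V" "A *v z2 = 0" "w = y2 + z2" using dec by blast
    have o: "inner y z = 0" if yV: "y \<in> V" and zA: "A *v z = 0" for y z
    proof -
      obtain u where "y = A *v u" using yV unfolding V_def by blast
      then show ?thesis using symA zA by simp
    qed
    have "P *v x = y1" "P *v w = y2" using Pv Pdec 1 2 by auto
    then show "inner (P *v x) w = inner x (P *v w)"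
      using o[OF 1(1) 2(2)] o[OF 2(1) 1(2)] 1 2
      by (simp add: inner_add_left inner_add_right inner_commute)
  qed
  define X where "X = X0 ** P"
  have Xv: "X *v y = g (P *v y)" for y by (simp add: X_def X0 matrix_vector_mul_assoc[symmetric])
  have AX: "A ** X = P"
    by (simp add: matrix_eq matrix_vector_mul_assoc[symmetric] Xv Pv Agw gA)
  have PA: "P *v (A *v x) = A *v x" for x using Pw unfolding V_def by blast
  have XA: "X ** A = P"
  proof (subst matrix_eq, intro allI)
    fix x show "(X ** A) *v x = P *v x"
    proof -
      have "(X ** A) *v x = g (P *v (A *v x))" by (simp only: matrix_vector_mul_assoc[symmetric] Xv)
      also have "\<dots> = g (A *v x)" by (simp only: PA)
      finally show ?thesis by (simp only: Pv)
    qed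
  qed
  have "penrose A X"
    unfolding penrose_def
  proof (intro conjI)
    show "A ** X ** A = A"
      by (simp add: AX matrix_eq matrix_vector_mul_assoc[symmetric] PA)
    show "X ** A ** X = X"
      by (simp add: XA matrix_eq matrix_vector_mul_assoc[symmetric] Pw Xv gV)
  qed (simp_all add: AX XA Psym)
  then show ?thesis by blast
qed

lemma pinv_sym:
  fixes A :: "real^'n^'n"
  assumes sym: "transpose A = A"
  shows "A ** pinv A ** A = A" "pinv A ** A ** pinv A = pinv A"
    "transpose (pinv A) = pinv A" "transpose (A ** pinv A) = A ** pinv A"
    "transpose (pinv A ** A) = pinv A ** A"
proof -
  obtain X where X: "penrose A X" using penrose_exists_sym[OF sym] by blast
  have "pinv A = X" unfolding pinv_def
    by (rule the_equality) (use X penrose_unique in \<open>auto simp: penrose_def\<close>)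
  then have P: "penrose A (pinv A)" using X by simp
  then show 1: "A ** pinv A ** A = A" "pinv A ** A ** pinv A = pinv A"
    "transpose (A ** pinv A) = A ** pinv A" "transpose (pinv A ** A) = pinv A ** A"
    by (auto simp: penrose_def)
  have "penrose A (transpose (pinv A))"
    unfolding penrose_def
  proof (intro conjI)
    show "A ** transpose (pinv A) ** A = A"
      by (metis 1(1) sym matrix_transpose_mul matrix_mul_assoc)
    show "transpose (pinv A) ** A ** transpose (pinv A) = transpose (pinv A)"
      by (metis 1(2) sym matrix_transpose_mul matrix_mul_assoc)
    show "transpose (A ** transpose (pinv A)) = A ** transpose (pinv A)"
      by (metis 1(4) sym matrix_transpose_mul transpose_transpose)
    show "transpose (transpose (pinv A) ** A) = transpose (pinv A) ** A"
      by (metis 1(3) sym matrix_transpose_mul transpose_transpose)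
  qed
  then show "transpose (pinv A) = pinv A" using P penrose_unique by blast
qed



lemma sum_UNIV_plus:
  fixes f :: "('a::finite + 'b::finite) \<Rightarrow> real"
  shows "(\<Sum>i\<in>UNIV. f i) = (\<Sum>a\<in>UNIV. f (Inl a)) + (\<Sum>b\<in>UNIV. f (Inr b))"
proof -
  have "(\<Sum>i\<in>UNIV. f i) = (\<Sum>i\<in>UNIV <+> UNIV. f i)" by simp
  also have "\<dots> = (\<Sum>a\<in>UNIV. f (Inl a)) + (\<Sum>b\<in>UNIV. f (Inr b))"
    by (subst sum.Plus) (auto simp: comp_def)
  finally show ?thesis .
qed

definition joinv :: "real^'q \<Rightarrow> real^'r \<Rightarrow> real^('q+'r)" where
  "joinv x z = (\<chi> i. case i of Inl a \<Rightarrow> x $ a | Inr b \<Rightarrow> z $ b)"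

lemma joinv_Inl [simp]: "joinv x z $ Inl a = x $ a" and joinv_Inr [simp]: "joinv x z $ Inr b = z $ b"
  by (simp_all add: joinv_def)

lemma joinv_surj: "u = joinv (\<chi> a. u $ Inl a) (\<chi> b. u $ Inr b)"
  by (simp add: vec_eq_iff joinv_def split: sum.splits)

lemma mv_joinv_Inl:
  fixes P :: "real^('q::finite+'r::finite)^('q+'r)"
  shows "(P *v joinv x z) $ Inl a = (blk11 P *v x) $ a + (blk12 P *v z) $ a"
  by (simp add: matrix_vector_mult_def sum_UNIV_plus blk11_def blk12_def)

lemma mv_joinv_Inr:
  fixes P :: "real^('q::finite+'r::finite)^('q+'r)"
  shows "(P *v joinv x z) $ Inr b = (blk21 P *v x) $ b + (blk22 P *v z) $ b"
  by (simp add: matrix_vector_mult_def sum_UNIV_plus blk21_def blk22_def)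

definition QF :: "real^('q::finite+'r::finite)^('q+'r) \<Rightarrow> real^'q \<Rightarrow> real^'r \<Rightarrow> real^'q \<Rightarrow> real^'r \<Rightarrow> real" where
  "QF P x z x' z' = inner x (blk11 P *v x') + inner x (blk12 P *v z') + inner z (blk21 P *v x') + inner z (blk22 P *v z')"

lemma bil_joinv:
  fixes P :: "real^('q::finite+'r::finite)^('q+'r)"
  shows "inner (joinv x z) (P *v joinv x' z') = QF P x z x' z'"
  unfolding QF_def inner_vec_def
  by (subst sum_UNIV_plus) (simp add: mv_joinv_Inl mv_joinv_Inr algebra_simps sum.distrib)

lemma stackI_mv:
  fixes Z :: "real^'q::finite^'r::finite" and x :: "real^'q"
  shows "stackI Z *v x = joinv x (Z *v x)"
proof -
  have "(\<Sum>j\<in>UNIV. (mat 1 :: real^'q^'q) $ a $ j * x $ j) = x $ a" for a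
    using matrix_vector_mul_lid[of x] unfolding matrix_vector_mult_def vec_eq_iff by simp
  then show ?thesis by (simp add: vec_eq_iff stackI_def matrix_vector_mult_def split: sum.splits)
qed

lemma Zset_iff:
  fixes P :: "real^('q::finite+'r::finite)^('q+'r)"
  assumes "transpose P = P"
  shows "Z \<in> Zset P \<longleftrightarrow> (\<forall>x. 0 \<le> QF P x (Z *v x) x (Z *v x))"
proof -
  have "transpose (transpose (stackI Z) ** P ** stackI Z) = transpose (stackI Z) ** P ** stackI Z"
    using assms by (simp add: matrix_transpose_mul matrix_mul_assoc)
  moreover have "inner x ((transpose (stackI Z) ** P ** stackI Z) *v x) = QF P x (Z *v x) x (Z *v x)" for x
    by (simp only: matrix_vector_mul_assoc[symmetric] inner_mv_transpose[symmetric] stackI_mv bil_joinv)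
  ultimately show ?thesis by (simp add: Zset_def psd_def)
qed


lemma blk_block [simp]:
  "blk11 (block_mat A B C D) = A" "blk12 (block_mat A B C D) = B"
  "blk21 (block_mat A B C D) = C" "blk22 (block_mat A B C D) = D"
  by (simp_all add: vec_eq_iff blk11_def blk12_def blk21_def blk22_def block_mat_def)

lemma blk_sym:
  fixes P :: "real^('q::finite+'r::finite)^('q+'r)"
  assumes "transpose P = P"
  shows "transpose (blk11 P) = blk11 P" "transpose (blk22 P) = blk22 P"
    "transpose (blk12 P) = blk21 P" "transpose (blk21 P) = blk12 P"
proof -
  have e: "P $ i $ j = P $ j $ i" for i j
  proof -
    have "transpose P $ j $ i = P $ j $ i" using assms by simp
    then show ?thesis by (simp add: transpose_def)
  qed
  show "transpose (blk11 P) = blk11 P" "transpose (blk22 P) = blk22 P"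
    "transpose (blk12 P) = blk21 P" "transpose (blk21 P) = blk12 P"
    unfolding vec_eq_iff blk11_def blk12_def blk21_def blk22_def transpose_def
    by (simp_all, (metis e)+)
qed

lemma transpose_block:
  "transpose (block_mat A B C D) = block_mat (transpose A) (transpose C) (transpose B) (transpose D)"
  by (simp add: vec_eq_iff block_mat_def transpose_def split: sum.splits)

lemma PiW_sym:
  fixes P :: "real^('q::finite+'r::finite)^('q+'r)"
  assumes "transpose P = P"
  shows "transpose (PiW P W) = PiW P W"
  using blk_sym[OF assms]
  by (simp add: PiW_def transpose_block matrix_transpose_mul matrix_mul_assoc)

lemma QF_PiW:
  fixes P :: "real^('q::finite+'r::finite)^('q+'r)"
  shows "QF (PiW P W) v z v z = QF P (W *v v) z (W *v v) z"
  unfolding QF_def PiW_def blk_block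
  by (simp only: matrix_vector_mul_assoc[symmetric] inner_mv_transpose[symmetric])



lemma psd_sym_inner:
  fixes S :: "real^'n^'n"
  assumes "transpose S = S"
  shows "inner x (S *v y) = inner y (S *v x)"
  by (metis assms inner_commute inner_mv_transpose)

lemma psd_null:
  fixes S :: "real^'n^'n"
  assumes "psd S" "inner b (S *v b) = 0"
  shows "S *v b = 0"
proof -
  have sym: "transpose S = S" and pos: "\<And>x. 0 \<le> inner x (S *v x)" using assms(1) by (auto simp: psd_def)
  define w where "w = S *v b"
  define \<alpha> where "\<alpha> = inner w w"
  define \<beta> where "\<beta> = inner w (S *v w)"
  have b0: "0 \<le> \<beta>" using pos \<beta>_def by simp
  have a0: "0 \<le> \<alpha>" by (simp add: \<alpha>_def)
  have key: "0 \<le> - 2 * s * \<alpha> + s * s * \<beta>" for s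
  proof -
    have "0 \<le> inner (b - s *\<^sub>R w) (S *v (b - s *\<^sub>R w))" using pos by blast
    also have "\<dots> = inner b (S *v b) - s * inner w (S *v b) - s * inner b (S *v w) + s * s * inner w (S *v w)"
      by (simp add: matrix_vector_mult_diff_distrib matrix_vector_mult_scaleR inner_diff_left inner_diff_right algebra_simps)
    also have "\<dots> = - 2 * s * \<alpha> + s * s * \<beta>"
      using assms(2) psd_sym_inner[OF sym, of b w] by (simp add: \<alpha>_def \<beta>_def w_def algebra_simps)
    finally show ?thesis .
  qed
  have "\<alpha> = 0"
  proof (rule ccontr)
    assume "\<alpha> \<noteq> 0"
    then have ap: "\<alpha> > 0" using a0 by simp
    define s where "s = \<alpha> / (\<beta> + 1)"
    have sp: "s > 0" using ap b0 by (simp add: s_def)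
    have "s * \<beta> < \<alpha>" using ap b0 unfolding s_def by (simp add: field_simps)
    then have "s * (s * \<beta>) < s * (2 * \<alpha>)" using sp ap by (simp add: mult_strict_left_mono)
    then show False using key[of s] by (simp add: algebra_simps)
  qed
  then show ?thesis by (simp add: \<alpha>_def w_def)
qed

lemma ker_factor:
  fixes A :: "real^'n^'n" and B :: "real^'n^'m"
  assumes "transpose A = A" "mker A \<subseteq> mker B"
  shows "B ** pinv A ** A = B"
proof -
  have AXA: "A ** pinv A ** A = A" using pinv_sym[OF assms(1)] by simp
  have "(B ** pinv A ** A) *v y = B *v y" for y
  proof -
    have "A *v (y - (pinv A ** A) *v y) = 0"
      by (simp add: matrix_vector_mult_diff_distrib matrix_vector_mul_assoc matrix_mul_assoc AXA)
    then have "B *v (y - (pinv A ** A) *v y) = 0" using assms(2) by (auto simp: mker_def)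
    then show ?thesis
      by (simp add: matrix_vector_mult_diff_distrib matrix_vector_mul_assoc matrix_mul_assoc)
  qed
  then show ?thesis by (simp add: matrix_eq)
qed

lemma extend:
  fixes S :: "real^'q^'q" and N :: "real^'r^'r" and W :: "real^'p^'q" and E :: "real^'p^'r"
    and L :: "real^'q^'p"
  assumes S: "psd S" and N: "psd N"
    and hyp: "\<And>v. inner (E *v v) (N *v (E *v v)) \<le> inner (W *v v) (S *v (W *v v))"
    and cond: "\<And>v. E *v (pinv (transpose W ** S ** W) *v ((transpose W ** S ** W) *v v))
                 + E *v (L *v (W *v v) - pinv (transpose W ** S ** W) *v ((transpose W ** S ** W) *v (L *v (W *v v))))
                 = E *v v"
  shows "\<exists>F. F ** W = E \<and> (\<forall>x. inner (F *v x) (N *v (F *v x)) \<le> inner x (S *v x))"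
proof -
  define H where "H = transpose W ** S ** W"
  define Hp where "Hp = pinv H"
  have symS: "transpose S = S" and posS: "\<And>x. 0 \<le> inner x (S *v x)" using S by (auto simp: psd_def)
  have symH: "transpose H = H" unfolding H_def using symS by (simp add: matrix_transpose_mul matrix_mul_assoc)
  note pH = pinv_sym[OF symH, folded Hp_def]
  have Hv: "inner c (H *v c) = inner (W *v c) (S *v (W *v c))" for c
    by (simp only: H_def matrix_vector_mul_assoc[symmetric] inner_mv_transpose[symmetric])
  define T where "T = Hp ** transpose W ** S + (mat 1 - Hp ** H) ** L"
  have Tv: "T *v x = Hp *v (transpose W *v (S *v x)) + (L *v x - Hp *v (H *v (L *v x)))" for x
    by (simp add: T_def matrix_vector_mult_add_rdistrib matrix_vector_mult_diff_rdistrib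
        matrix_vector_mul_assoc[symmetric] del: transpose_matrix_vector)
  define F where "F = E ** T"
  have FW: "F ** W = E"
  proof (subst matrix_eq, intro allI)
    fix v
    have "(F ** W) *v v = E *v (T *v (W *v v))" by (simp only: F_def matrix_vector_mul_assoc matrix_mul_assoc)
    also have "\<dots> = E *v v"
    proof -
      have HW: "transpose W *v (S *v (W *v v)) = H *v v"
        by (simp only: H_def matrix_vector_mul_assoc matrix_mul_assoc)
      have c: "E *v (Hp *v (H *v v)) + E *v (L *v (W *v v) - Hp *v (H *v (L *v (W *v v)))) = E *v v"
        using cond[of v] unfolding H_def[symmetric] Hp_def[symmetric] .
      show ?thesis unfolding Tv HW matrix_vector_right_distrib using c .
    qed
    finally show "(F ** W) *v v = E *v v" .
  qed
  have bound: "inner (W *v (T *v x)) (S *v (W *v (T *v x))) \<le> inner x (S *v x)" for x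
  proof -
    define u where "u = transpose W *v (S *v x)"
    define h where "h = Hp *v u"
    define a where "a = W *v h"
    define c where "c = L *v x - Hp *v (H *v (L *v x))"
    define b where "b = W *v c"
    have WT: "W *v (T *v x) = a + b"
      by (simp add: Tv a_def b_def h_def u_def c_def matrix_vector_right_distrib del: transpose_matrix_vector)
    have HHH: "H *v (Hp *v (H *v y)) = H *v y" for y by (metis pH(1) matrix_vector_mul_assoc)
    have Hc: "H *v c = 0"
      by (simp add: c_def matrix_vector_mult_diff_distrib HHH)
    have Sb: "S *v b = 0"
      by (rule psd_null[OF S]) (metis Hc Hv b_def inner_zero_right)
    have "inner (a + b) (S *v (a + b)) = inner a (S *v a)"
      using Sb psd_sym_inner[OF symS, of a b]
      by (simp add: matrix_vector_right_distrib inner_add_left inner_add_right)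
    also have "inner a (S *v a) = inner h (H *v h)" using Hv a_def by simp
    also have "\<dots> = inner u (Hp *v u)"
    proof -
      have "inner h (H *v h) = inner u (Hp *v (H *v (Hp *v u)))"
        by (metis h_def inner_mv_transpose pH(3))
      also have "\<dots> = inner u (Hp *v u)"
        by (metis pH(2) matrix_vector_mul_assoc)
      finally show ?thesis .
    qed
    finally have aa: "inner (a + b) (S *v (a + b)) = inner u (Hp *v u)" .
    have ax: "inner a (S *v x) = inner u (Hp *v u)"
      by (metis a_def h_def u_def inner_mv_transpose inner_commute pH(3))
    have "0 \<le> inner (x - a) (S *v (x - a))" using posS by blast
    also have "\<dots> = inner x (S *v x) - 2 * inner a (S *v x) + inner a (S *v a)"
      using psd_sym_inner[OF symS, of x a]
      by (simp add: matrix_vector_mult_diff_distrib inner_diff_left inner_diff_right)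
    finally have "inner a (S *v a) \<le> inner x (S *v x)"
      using ax \<open>inner a (S *v a) = inner h (H *v h)\<close> \<open>inner h (H *v h) = inner u (Hp *v u)\<close> by linarith
    then show ?thesis using WT aa
      \<open>inner a (S *v a) = inner h (H *v h)\<close> \<open>inner h (H *v h) = inner u (Hp *v u)\<close> by simp
  qed
  have "inner (F *v x) (N *v (F *v x)) \<le> inner x (S *v x)" for x
    using hyp[of "T *v x"] bound[of x] by (simp add: F_def matrix_vector_mul_assoc[symmetric])
  then show ?thesis using FW by blast
qed



lemma QF_complete:
  fixes P :: "real^('q::finite+'r::finite)^('q+'r)"
  assumes symP: "transpose P = P" and ker: "mker (blk22 P) \<subseteq> mker (blk12 P)"
  shows "QF P x z x z = inner x (schur22 P *v x)
           - inner (z + pinv (blk22 P) *v (blk21 P *v x)) ((- blk22 P) *v (z + pinv (blk22 P) *v (blk21 P *v x)))"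
proof -
  define A where "A = blk11 P"
  define B where "B = blk12 P"
  define C where "C = blk21 P"
  define D where "D = blk22 P"
  define X where "X = pinv D"
  note bs = blk_sym[OF symP, folded A_def B_def C_def D_def]
  have symD: "transpose D = D" using bs by simp
  have tX: "transpose X = X" using pinv_sym[OF symD] X_def by simp
  have BXD: "B ** X ** D = B" unfolding X_def B_def D_def using ker_factor[OF symD[unfolded D_def] ker] .
  have DXC: "D ** X ** C = C"
  proof -
    have "transpose (B ** X ** D) = D ** X ** C"
      by (simp add: matrix_transpose_mul matrix_mul_assoc symD tX bs)
    then show ?thesis using BXD bs by simp
  qed
  define w where "w = X *v (C *v x)"
  have Dw: "D *v w = C *v x" unfolding w_def by (metis DXC matrix_vector_mul_assoc)
  have negD: "(- D) *v y = - (D *v y)" for y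
    by (simp add: matrix_vector_mult_def vec_eq_iff sum_negf)
  have BC: "inner x (B *v y) = inner y (C *v x)" for y
    by (metis bs(3) inner_commute inner_mv_transpose)
  have e1: "inner w (D *v z) = inner z (C *v x)" using psd_sym_inner[OF symD, of w z] Dw by simp
  have e2: "inner w (D *v w) = inner x (B *v (X *v (C *v x)))"
    using Dw BC[of "X *v (C *v x)"] by (simp add: w_def inner_commute)
  have e3: "inner x (schur22 P *v x) = inner x (A *v x) - inner x (B *v (X *v (C *v x)))"
    by (simp add: schur22_def A_def[symmetric] B_def[symmetric] C_def[symmetric] D_def[symmetric]
        X_def[symmetric] matrix_vector_mult_diff_rdistrib inner_diff_right matrix_vector_mul_assoc[symmetric]
        del: transpose_matrix_vector)
  show ?thesis
    unfolding w_def[symmetric] D_def[symmetric] X_def[symmetric] C_def[symmetric] QF_def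
      A_def[symmetric] B_def[symmetric]
    using e1 e2 e3 BC[of z] Dw
    by (simp add: negD matrix_vector_right_distrib inner_add_left inner_add_right inner_diff_right inner_minus_right)
qed

theorem mainTheorem3:
  fixes P :: "real^('q::finite + 'r::finite)^('q + 'r)"
    and W :: "real^'p::finite^'q"
  assumes "P \<in> PiSet"
  shows "(\<lambda>Z. Z ** W) ` Zset P \<subseteq> Zset (PiW P W) \<and>
         ((rank W = CARD('p) \<or> invertible (blk22 P)) \<longrightarrow>
           (\<lambda>Z. Z ** W) ` Zset P = Zset (PiW P W))"
proof -
  have symP: "transpose P = P" and nsdD: "psd (- blk22 P)" and S: "psd (schur22 P)"
    and ker: "mker (blk22 P) \<subseteq> mker (blk12 P)"
    using assms by (auto simp: PiSet_def symmetric_mat_def nsd_def)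
  define C where "C = blk21 P"
  define D where "D = blk22 P"
  define X where "X = pinv D"
  define N where "N = - D"
  define S where "S = schur22 P"
  have N: "psd N" using nsdD by (simp add: N_def D_def)
  have Sp: "psd S" using S by (simp add: S_def)
  have QC: "QF P x z x z = inner x (S *v x) - inner (z + X *v (C *v x)) (N *v (z + X *v (C *v x)))" for x z
    using QF_complete[OF symP ker] by (simp add: C_def D_def X_def N_def S_def)
  have ZP: "Z \<in> Zset P \<longleftrightarrow> (\<forall>x. 0 \<le> QF P x (Z *v x) x (Z *v x))" for Z
    using Zset_iff[OF symP] .
  have ZW: "Y \<in> Zset (PiW P W) \<longleftrightarrow> (\<forall>v. 0 \<le> QF P (W *v v) (Y *v v) (W *v v) (Y *v v))" for Y
    using Zset_iff[OF PiW_sym[OF symP], of Y W] by (simp add: QF_PiW)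
  have incl: "(\<lambda>Z. Z ** W) ` Zset P \<subseteq> Zset (PiW P W)"
  proof
    fix Y assume "Y \<in> (\<lambda>Z. Z ** W) ` Zset P"
    then obtain Z where Z: "Z \<in> Zset P" and Y: "Y = Z ** W" by blast
    show "Y \<in> Zset (PiW P W)" unfolding ZW Y
      using Z unfolding ZP by (simp add: matrix_vector_mul_assoc[symmetric])
  qed
  moreover have "Zset (PiW P W) \<subseteq> (\<lambda>Z. Z ** W) ` Zset P"
    if hyp0: "rank W = CARD('p) \<or> invertible (blk22 P)"
  proof
    fix Y assume Y: "Y \<in> Zset (PiW P W)"
    define E where "E = Y + X ** C ** W"
    have Ev: "E *v v = Y *v v + X *v (C *v (W *v v))" for v
      by (simp add: E_def matrix_vector_mult_add_rdistrib matrix_vector_mul_assoc matrix_mul_assoc)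
    have hyp: "inner (E *v v) (N *v (E *v v)) \<le> inner (W *v v) (S *v (W *v v))" for v
    proof -
      have "0 \<le> QF P (W *v v) (Y *v v) (W *v v) (Y *v v)" using Y[unfolded ZW] by blast
      then show ?thesis unfolding QC Ev[symmetric] by linarith
    qed
    define H where "H = transpose W ** S ** W"
    define Hp where "Hp = pinv H"
    have Hv: "inner c (H *v c) = inner (W *v c) (S *v (W *v c))" for c
      by (simp only: H_def matrix_vector_mul_assoc[symmetric] inner_mv_transpose[symmetric])
    have symS: "transpose S = S" using Sp by (simp add: psd_def)
    have symH: "transpose H = H" unfolding H_def using symS by (simp add: matrix_transpose_mul matrix_mul_assoc)
    have HHH: "H *v (Hp *v (H *v y)) = H *v y" for y
      by (metis pinv_sym(1)[OF symH] Hp_def matrix_vector_mul_assoc)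
    obtain L :: "real^'q^'p" where cond: "\<And>v. E *v (Hp *v (H *v v))
                 + E *v (L *v (W *v v) - Hp *v (H *v (L *v (W *v v)))) = E *v v"
    proof (cases "rank W = CARD('p)")
      case True
      then have "inj ((*v) W)" by (simp add: full_rank_injective)
      then obtain L :: "real^'q^'p" where LW: "L ** W = mat 1" using matrix_left_invertible_injective by blast
      have "L *v (W *v v) = v" for v by (simp add: matrix_vector_mul_assoc LW)
      then show ?thesis using that[of L]
        by (simp add: matrix_vector_mult_diff_distrib)
    next
      case False
      then have invD: "invertible D" using hyp0 D_def by simp
      then obtain Di where Di: "Di ** D = mat 1" using invertible_left_inverse by blast
      have Ez: "E *v (y - Hp *v (H *v y)) = 0" for y
      proof -
        define d where "d = y - Hp *v (H *v y)"
        have "H *v d = 0" by (simp add: d_def matrix_vector_mult_diff_distrib HHH)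
        then have "inner (W *v d) (S *v (W *v d)) = 0" using Hv[of d] by simp
        then have le: "inner (E *v d) (N *v (E *v d)) \<le> 0" using hyp[of d] by simp
        have "0 \<le> inner (E *v d) (N *v (E *v d))" using N by (simp add: psd_def)
        then have "N *v (E *v d) = 0" using le psd_null[OF N] by simp
        then have "D *v (E *v d) = 0" unfolding N_def
          by (simp add: matrix_vector_mult_def vec_eq_iff sum_negf)
        then have "Di *v (D *v (E *v d)) = 0" by simp
        then have "E *v d = 0" by (metis Di matrix_vector_mul_assoc matrix_vector_mul_lid)
        then show ?thesis by (simp add: d_def)
      qed
      have "E *v (Hp *v (H *v v)) + E *v (0 *v (W *v v) - Hp *v (H *v (0 *v (W *v v)))) = E *v v" for v
        using Ez[of v] by (simp add: matrix_vector_mult_diff_distrib)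
      then show ?thesis using that[of 0] by blast
    qed
    obtain F where FW: "F ** W = E" and Fb: "\<And>x. inner (F *v x) (N *v (F *v x)) \<le> inner x (S *v x)"
      using extend[OF Sp N hyp, of L] cond unfolding H_def Hp_def by blast
    define Z where "Z = F - X ** C"
    have Zv: "Z *v x + X *v (C *v x) = F *v x" for x
      by (simp add: Z_def matrix_vector_mult_diff_rdistrib matrix_vector_mul_assoc)
    have "Z \<in> Zset P" unfolding ZP
    proof
      fix x show "0 \<le> QF P x (Z *v x) x (Z *v x)" using QC[of x "Z *v x"] Zv[of x] Fb[of x] by simp
    qed
    moreover have "Z ** W = Y"
    proof (subst matrix_eq, intro allI)
      fix v
      have "(Z ** W) *v v = F *v (W *v v) - X *v (C *v (W *v v))"
        using Zv[of "W *v v"] by (simp add: matrix_vector_mul_assoc[symmetric] algebra_simps)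
      also have "\<dots> = Y *v v" using Ev[of v] FW by (simp add: matrix_vector_mul_assoc)
      finally show "(Z ** W) *v v = Y *v v" .
    qed
    ultimately show "Y \<in> (\<lambda>Z. Z ** W) ` Zset P" by blast
  qed
  ultimately show ?thesis by blast
qed


end
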